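(* Let $\mathcal{Q}=\left(\frac{\lambda,\ \mu}{F}\right)$ be a generalized quaternion algebra and let $A,B\in\mathcal{Q}$ be invertible quaternions that do not commute. If $A,B$ is a matching pair (i.e. $\mathrm{tr}(A)=N(A)\neq 0$ and $A\cdot B=0$), then $A,B$ satisfy the fundamental equation $$A^{-1}B^{-1}AB-BA^{-1}B^{-1}A=B^{-1}AB-A.$$ If moreover $\mathcal{Q}$ is anisotropic, then conversely every pair of invertible, non-commuting $A,B\in\mathcal{Q}$ satisfying the fundamental equation is a matching pair; i.e. in the anisotropic case being a matching pair is necessary and sufficient.
   Context: $F$ is a field of characteristic not $2$, and $\lambda,\mu\in F$ are nonzero. The generalized quaternion algebra $\left(\frac{\lambda,\ \mu}{F}\right)$ is the $4$-dimensional associative $F$-algebra with basis $1,i,j,k$ and relations $i^2=\lambda$, $j^2=\mu$, $ij=-ji=k$. For $A=a_0+a_1i+a_2j+a_3k$ the conjugate is $\overline{A}=a_0-a_1i-a_2j-a_3k$, the norm is $N(A)=A\overline{A}=a_0^2-\lambda a_1^2-\mu a_2^2+\lambda\mu a_3^2\in F$, and the trace is $\mathrm{tr}(A)=A+\overline{A}=2a_0$. The bilinear form is $A\cdot B=\tfrac12(A\overline{B}+B\overline{A})=a_0b_0-\lambda a_1b_1-\mu a_2b_2+\lambda\mu a_3b_3$. A nonzero element $X$ is isotropic if $N(X)=0$; the algebra is anisotropic if it has no isotropic elements. A quaternion $A$ is balanced if $\mathrm{tr}(A)=N(A)\neq 0$; a pair of invertible non-commuting quaternions $A,B$ is a matching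 pair if $A$ is balanced and $A\cdot B=0$. *)

theory Defs
  imports Main
begin

text \<open>Generalized quaternion algebra (lam, mu / F): elements a0 + a1 i + a2 j + a3 k
  with i^2 = lam, j^2 = mu, ij = -ji = k. The structure constants lam, mu are passed
  explicitly to the multiplication.\<close>

datatype 'a quat = Quat (q0: 'a) (q1: 'a) (q2: 'a) (q3: 'a)

definition qone :: "'a::field quat" where
  "qone = Quat 1 0 0 0"

definition qzero :: "'a::field quat" where
  "qzero = Quat 0 0 0 0"

definition qadd :: "'a::field quat \<Rightarrow> 'a quat \<Rightarrow> 'a quat" where
  "qadd A B = Quat (q0 A + q0 B) (q1 A + q1 B) (q2 A + q2 B) (q3 A + q3 B)"

definition qsub :: "'a::field quat \<Rightarrow> 'a quat \<Rightarrow> 'a quat" where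
  "qsub A B = Quat (q0 A - q0 B) (q1 A - q1 B) (q2 A - q2 B) (q3 A - q3 B)"

text \<open>Multiplication derived from i^2 = lam, j^2 = mu, k = ij = -ji
  (hence k^2 = -lam mu, ik = lam j, ki = -lam j, jk = -mu i, kj = mu i).\<close>
definition qmul :: "'a::field \<Rightarrow> 'a \<Rightarrow> 'a quat \<Rightarrow> 'a quat \<Rightarrow> 'a quat" where
  "qmul lam mu A B = Quat
     (q0 A * q0 B + lam * q1 A * q1 B + mu * q2 A * q2 B - lam * mu * q3 A * q3 B)
     (q0 A * q1 B + q1 A * q0 B - mu * q2 A * q3 B + mu * q3 A * q2 B)
     (q0 A * q2 B + q2 A * q0 B + lam * q1 A * q3 B - lam * q3 A * q1 B)
     (q0 A * q3 B + q3 A * q0 B + q1 A * q2 B - q2 A * q1 B)"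

definition qconj :: "'a::field quat \<Rightarrow> 'a quat" where
  "qconj A = Quat (q0 A) (- q1 A) (- q2 A) (- q3 A)"

definition qnorm :: "'a::field \<Rightarrow> 'a \<Rightarrow> 'a quat \<Rightarrow> 'a" where
  "qnorm lam mu A = q0 A ^ 2 - lam * q1 A ^ 2 - mu * q2 A ^ 2 + lam * mu * q3 A ^ 2"

definition qtrace :: "'a::field quat \<Rightarrow> 'a" where
  "qtrace A = 2 * q0 A"

definition qdot :: "'a::field \<Rightarrow> 'a \<Rightarrow> 'a quat \<Rightarrow> 'a quat \<Rightarrow> 'a" where
  "qdot lam mu A B = q0 A * q0 B - lam * q1 A * q1 B - mu * q2 A * q2 B + lam * mu * q3 A * q3 B"

definition qinvertible :: "'a::field \<Rightarrow> 'a \<Rightarrow> 'a quat \<Rightarrow> bool" where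
  "qinvertible lam mu A \<longleftrightarrow> (\<exists>C. qmul lam mu A C = qone \<and> qmul lam mu C A = qone)"

definition qinv :: "'a::field \<Rightarrow> 'a \<Rightarrow> 'a quat \<Rightarrow> 'a quat" where
  "qinv lam mu A = (SOME C. qmul lam mu A C = qone \<and> qmul lam mu C A = qone)"

definition anisotropic :: "'a::field \<Rightarrow> 'a \<Rightarrow> bool" where
  "anisotropic lam mu \<longleftrightarrow> (\<forall>X. X \<noteq> qzero \<longrightarrow> qnorm lam mu X \<noteq> 0)"

definition balanced :: "'a::field \<Rightarrow> 'a \<Rightarrow> 'a quat \<Rightarrow> bool" where
  "balanced lam mu A \<longleftrightarrow> qtrace A = qnorm lam mu A \<and> qnorm lam mu A \<noteq> 0"

definition matching_pair :: "'a::field \<Rightarrow> 'a \<Rightarrow> 'a quat \<Rightarrow> 'a quat \<Rightarrow> bool" where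
  "matching_pair lam mu A B \<longleftrightarrow>
     qinvertible lam mu A \<and> qinvertible lam mu B \<and> qmul lam mu A B \<noteq> qmul lam mu B A \<and>
     balanced lam mu A \<and> qdot lam mu A B = 0"

definition fundamental_eq :: "'a::field \<Rightarrow> 'a \<Rightarrow> 'a quat \<Rightarrow> 'a quat \<Rightarrow> bool" where
  "fundamental_eq lam mu A B \<longleftrightarrow>
     (let m = qmul lam mu; Ai = qinv lam mu A; Bi = qinv lam mu B in
      qsub (m (m (m Ai Bi) A) B) (m (m (m B Ai) Bi) A) = qsub (m (m Bi A) B) A)"

end

theory Submission
  imports Defs
begin

definition qscale :: "'a::field \<Rightarrow> 'a quat \<Rightarrow> 'a quat" where
  "qscale c A = Quat (c * q0 A) (c * q1 A) (c * q2 A) (c * q3 A)"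

lemma polyid:
  fixes l m :: "'a::field"
  shows "qsub (qsub (qmul l m (qmul l m (qmul l m (qconj A) (qconj B)) A) B)
                    (qmul l m (qmul l m (qmul l m B (qconj A)) (qconj B)) A))
              (qsub (qscale (qnorm l m A) (qmul l m (qmul l m (qconj B) A) B))
                    (qscale (qnorm l m A * qnorm l m B) A))
       = qmul l m (Quat ((2 * q0 A - qnorm l m A) * q0 B - 2 * qdot l m A B)
                        (-(2 * q0 A - qnorm l m A) * q1 B)
                        (-(2 * q0 A - qnorm l m A) * q2 B)
                        (-(2 * q0 A - qnorm l m A) * q3 B))
                  (qsub (qmul l m A B) (qmul l m B A))"
  apply (cases A; cases B)
  apply (simp add: qmul_def qsub_def qscale_def qconj_def qnorm_def qdot_def)
  apply (intro conjI; simp add: algebra_simps power2_eq_square)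
  done

lemma qmul_assoc: "qmul l m (qmul l m A B) C = qmul l m A (qmul l m B C)"
  by (simp add: qmul_def algebra_simps)

lemma qnorm_mul: "qnorm l m (qmul l m A B) = qnorm l m A * qnorm l m B"
  by (simp add: qnorm_def qmul_def power2_eq_square algebra_simps)

lemma qmul_one1[simp]: "qmul l m qone A = A" by (cases A) (simp add: qmul_def qone_def)
lemma qmul_one2[simp]: "qmul l m A qone = A" by (cases A) (simp add: qmul_def qone_def)
lemma qnorm_one[simp]: "qnorm l m qone = 1" by (simp add: qnorm_def qone_def)
lemma qnorm_zero[simp]: "qnorm l m qzero = 0" by (simp add: qnorm_def qzero_def)

lemma scale_mul1[simp]: "qmul l m (qscale c A) B = qscale c (qmul l m A B)"
  by (simp add: qmul_def qscale_def algebra_simps)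
lemma scale_mul2[simp]: "qmul l m A (qscale c B) = qscale c (qmul l m A B)"
  by (simp add: qmul_def qscale_def algebra_simps)
lemma scale_scale[simp]: "qscale c (qscale d A) = qscale (c * d) A"
  by (simp add: qscale_def)

lemma mul_conj1: "qmul l m A (qconj A) = Quat (qnorm l m A) 0 0 0"
  by (cases A) (simp add: qmul_def qconj_def qnorm_def power2_eq_square algebra_simps)
lemma mul_conj2: "qmul l m (qconj A) A = Quat (qnorm l m A) 0 0 0"
  by (cases A) (simp add: qmul_def qconj_def qnorm_def power2_eq_square algebra_simps)

lemma inv_candidate:
  fixes l m :: "'a::field"
  assumes "qnorm l m A \<noteq> 0"
  shows "qmul l m A (qscale (1 / qnorm l m A) (qconj A)) = qone \<and>
         qmul l m (qscale (1 / qnorm l m A) (qconj A)) A = qone"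
  using assms by (simp only: scale_mul1 scale_mul2 mul_conj1 mul_conj2) (simp add: qscale_def qone_def)

lemma qinvertible_iff:
  fixes l m :: "'a::field"
  shows "qinvertible l m A \<longleftrightarrow> qnorm l m A \<noteq> 0"
proof
  assume "qinvertible l m A"
  then obtain C where "qmul l m A C = qone" unfolding qinvertible_def by blast
  then have "qnorm l m A * qnorm l m C = 1" by (metis qnorm_mul qnorm_one)
  then show "qnorm l m A \<noteq> 0" by auto
next
  assume "qnorm l m A \<noteq> 0"
  then show "qinvertible l m A" unfolding qinvertible_def using inv_candidate by blast
qed

lemma qinv_eq:
  fixes l m :: "'a::field"
  assumes "qnorm l m A \<noteq> 0"
  shows "qinv l m A = qscale (1 / qnorm l m A) (qconj A)"
proof -
  let ?D = "qscale (1 / qnorm l m A) (qconj A)"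
  have D: "qmul l m A ?D = qone" "qmul l m ?D A = qone" using inv_candidate[OF assms] by auto
  have ex: "\<exists>C. qmul l m A C = qone \<and> qmul l m C A = qone" using D by blast
  let ?C = "qinv l m A"
  have C: "qmul l m A ?C = qone \<and> qmul l m ?C A = qone"
    unfolding qinv_def by (rule someI_ex[OF ex])
  have "?C = qmul l m (qmul l m ?D A) ?C" using D by simp
  also have "\<dots> = qmul l m ?D (qmul l m A ?C)" by (rule qmul_assoc)
  also have "\<dots> = ?D" using C by simp
  finally show ?thesis .
qed

lemma cancel_aux:
  fixes n p :: "'a::field"
  assumes "p \<noteq> 0"
  shows "(a * p + d * (n * (p * p)) = b * p + c * (n * p)) \<longleftrightarrow> (a + d * (n * p) = b + c * n)"
proof -
  have "a * p + d * (n * (p * p)) = p * (a + d * (n * p))" "b * p + c * (n * p) = p * (b + c * n)"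
    by (simp_all add: algebra_simps)
  then show ?thesis using assms by simp
qed

lemma eqlem:
  fixes n p :: "'a::field"
  assumes "n \<noteq> 0" "p \<noteq> 0"
  shows "(qsub (qscale (1 / (p * n)) P) (qscale (1 / (p * n)) Q) = qsub (qscale (1 / p) R) S)
     \<longleftrightarrow> qsub (qsub P Q) (qsub (qscale n R) (qscale (n * p) S)) = qzero"
  using assms
  apply (cases P; cases Q; cases R; cases S)
  apply (simp add: qsub_def qscale_def qzero_def field_simps)
  apply (simp add: cancel_aux)
  done

lemma fund_iff:
  fixes l m :: "'a::field"
  assumes "qnorm l m A \<noteq> 0" "qnorm l m B \<noteq> 0"
  shows "fundamental_eq l m A B \<longleftrightarrow>
    qmul l m (Quat ((2 * q0 A - qnorm l m A) * q0 B - 2 * qdot l m A B)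
                        (-(2 * q0 A - qnorm l m A) * q1 B)
                        (-(2 * q0 A - qnorm l m A) * q2 B)
                        (-(2 * q0 A - qnorm l m A) * q3 B))
                  (qsub (qmul l m A B) (qmul l m B A)) = qzero"
  unfolding polyid[symmetric] fundamental_eq_def Let_def qinv_eq[OF assms(1)] qinv_eq[OF assms(2)]
  apply (simp add: qmul_assoc)
  using eqlem[OF assms] by (simp add: qmul_assoc)

lemma zero_prod:
  fixes l m :: "'a::field"
  assumes "anisotropic l m" "qmul l m Y C = qzero" "C \<noteq> qzero"
  shows "Y = qzero"
proof (rule ccontr)
  assume "Y \<noteq> qzero"
  then have "qnorm l m Y \<noteq> 0" "qnorm l m C \<noteq> 0" using assms unfolding anisotropic_def by auto
  moreover have "qnorm l m Y * qnorm l m C = 0" using assms(2) by (metis qnorm_mul qnorm_zero)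
  ultimately show False by simp
qed

lemma sub_zero: "qsub X Y = qzero \<longleftrightarrow> X = Y"
  by (cases X; cases Y) (auto simp: qsub_def qzero_def)

lemma Y_zero:
  fixes l m :: "'a::field"
  assumes two: "(2::'a) \<noteq> 0"
    and Y: "Quat ((2 * q0 A - qnorm l m A) * q0 B - 2 * qdot l m A B)
                        (-(2 * q0 A - qnorm l m A) * q1 B)
                        (-(2 * q0 A - qnorm l m A) * q2 B)
                        (-(2 * q0 A - qnorm l m A) * q3 B) = qzero"
    and nc: "qmul l m A B \<noteq> qmul l m B A"
  shows "2 * q0 A = qnorm l m A \<and> qdot l m A B = 0"
proof (cases "2 * q0 A - qnorm l m A = 0")
  case True
  then show ?thesis using Y two by (simp add: qzero_def)
next
  case False
  then have "q1 B = 0" "q2 B = 0" "q3 B = 0" using Y by (auto simp: qzero_def)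
  then have "qmul l m A B = qmul l m B A" by (simp add: qmul_def)
  then show ?thesis using nc by simp
qed

theorem theorem4p4:
  fixes lam mu :: "'a::field"
  assumes char: "(2::'a) \<noteq> 0"
    and lam: "lam \<noteq> 0" and mu: "mu \<noteq> 0"
  shows "(\<forall>A B. qinvertible lam mu A \<and> qinvertible lam mu B \<and>
                qmul lam mu A B \<noteq> qmul lam mu B A \<and> matching_pair lam mu A B
                \<longrightarrow> fundamental_eq lam mu A B)
       \<and> (anisotropic lam mu \<longrightarrow>
            (\<forall>A B. qinvertible lam mu A \<and> qinvertible lam mu B \<and>
                   qmul lam mu A B \<noteq> qmul lam mu B A
                   \<longrightarrow> (matching_pair lam mu A B \<longleftrightarrow> fundamental_eq lam mu A B)))"
proof -
  have fwd: "fundamental_eq lam mu A B" if "matching_pair lam mu A B" for A B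
  proof -
    have inv: "qnorm lam mu A \<noteq> 0" "qnorm lam mu B \<noteq> 0"
      using that unfolding matching_pair_def qinvertible_iff by auto
    have "2 * q0 A = qnorm lam mu A" "qdot lam mu A B = 0"
      using that unfolding matching_pair_def balanced_def qtrace_def by auto
    then show ?thesis unfolding fund_iff[OF inv]
      by (simp add: qmul_def qzero_def)
  qed
  have bwd: "matching_pair lam mu A B" if an: "anisotropic lam mu"
    and h: "qinvertible lam mu A" "qinvertible lam mu B" "qmul lam mu A B \<noteq> qmul lam mu B A"
    and f: "fundamental_eq lam mu A B" for A B
  proof -
    have inv: "qnorm lam mu A \<noteq> 0" "qnorm lam mu B \<noteq> 0"
      using h unfolding qinvertible_iff by auto
    have C: "qsub (qmul lam mu A B) (qmul lam mu B A) \<noteq> qzero" using h(3) sub_zero by metis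
    have "2 * q0 A = qnorm lam mu A \<and> qdot lam mu A B = 0"
      by (rule Y_zero[OF char zero_prod[OF an f[unfolded fund_iff[OF inv]] C] h(3)])
    then show ?thesis using h inv unfolding matching_pair_def balanced_def qtrace_def by auto
  qed
  show ?thesis using fwd bwd by blast
qed

end
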